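(* Let $\tilde L$ be a minimum-size counterexample. For every meet-irreducible element $m$ of $\tilde L$ there exists a join-irreducible element $j$ of $\tilde L$ such that $j\le m$ and $|{\uparrow}j|=\frac{|\tilde L|+1}{2}$.
   Context: For a poset $P$, $x$ upper covers $y$ (and $y$ lower covers $x$) if $y<x$ with nothing strictly between. Join-irreducible: upper covers exactly one element; meet-irreducible: lower covers exactly one element. For $x\in P$, ${\uparrow}x=\{y\in P: x\le y\}$. A counterexample is a finite lattice $L$ with $|L|>1$ in which every join-irreducible $j$ satisfies $|{\uparrow}j|>|L|/2$; a minimum-size counterexample is a counterexample $\tilde L$ such that no counterexample has fewer elements. *)

theory Defs
  imports Complex_Main "HOL-Algebra.Lattice"
begin

text \<open>Finite lattices are represented by HOL-Algebra's gorder records satisfying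
  the locale predicate lattice (where the equivalence is equality).\<close>

definition upper_covers :: "'a gorder \<Rightarrow> 'a \<Rightarrow> 'a \<Rightarrow> bool" where
  "upper_covers L x y \<longleftrightarrow> x \<in> carrier L \<and> y \<in> carrier L \<and> y \<sqsubset>\<^bsub>L\<^esub> x \<and>
     \<not> (\<exists>z \<in> carrier L. y \<sqsubset>\<^bsub>L\<^esub> z \<and> z \<sqsubset>\<^bsub>L\<^esub> x)"

definition join_irreducible :: "'a gorder \<Rightarrow> 'a \<Rightarrow> bool" where
  "join_irreducible L j \<longleftrightarrow> j \<in> carrier L \<and> card {y \<in> carrier L. upper_covers L j y} = 1"

definition meet_irreducible :: "'a gorder \<Rightarrow> 'a \<Rightarrow> bool" where
  "meet_irreducible L m \<longleftrightarrow> m \<in> carrier L \<and> card {y \<in> carrier L. upper_covers L y m} = 1"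

definition up_set :: "'a gorder \<Rightarrow> 'a \<Rightarrow> 'a set" where
  "up_set L x = {y \<in> carrier L. x \<sqsubseteq>\<^bsub>L\<^esub> y}"

definition counterexample :: "'a gorder \<Rightarrow> bool" where
  "counterexample L \<longleftrightarrow> lattice L \<and> finite (carrier L) \<and> card (carrier L) > 1 \<and>
     (\<forall>j. join_irreducible L j \<longrightarrow> real (card (up_set L j)) > real (card (carrier L)) / 2)"

text \<open>Minimality is measured against all counterexamples; every finite lattice is
  isomorphic to one carried by a set of naturals, so quantifying over nat-carried
  lattices covers all finite lattices.\<close>
definition min_counterexample :: "'a gorder \<Rightarrow> bool" where
  "min_counterexample L \<longleftrightarrow> counterexample L \<and>
     (\<forall>L' :: nat gorder. counterexample L' \<longrightarrow> card (carrier L) \<le> card (carrier L'))"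

end

theory Submission
  imports Defs
begin

definition plat :: "'a gorder \<Rightarrow> bool" where
  "plat L \<longleftrightarrow> eq L = (=) \<and> (\<forall>x\<in>carrier L. le L x x)
   \<and> (\<forall>x\<in>carrier L. \<forall>y\<in>carrier L. le L x y \<and> le L y x \<longrightarrow> x = y)
   \<and> (\<forall>x\<in>carrier L. \<forall>y\<in>carrier L. \<forall>z\<in>carrier L. le L x y \<and> le L y z \<longrightarrow> le L x z)
   \<and> (\<forall>x\<in>carrier L. \<forall>y\<in>carrier L. \<exists>s\<in>carrier L. le L x s \<and> le L y s \<and>
          (\<forall>u\<in>carrier L. le L x u \<and> le L y u \<longrightarrow> le L s u))
   \<and> (\<forall>x\<in>carrier L. \<forall>y\<in>carrier L. \<exists>s\<in>carrier L. le L s x \<and> le L s y \<and>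
          (\<forall>u\<in>carrier L. le L u x \<and> le L u y \<longrightarrow> le L u s))"

lemma lattice_plat: "lattice L \<Longrightarrow> plat L"
proof -
  assume "lattice L"
  then interpret lattice L .
  have e: "eq L = (=)" using eq_is_equal by simp
  show ?thesis unfolding plat_def
  proof (intro conjI ballI)
    show "eq L = (=)" by (rule e)
  next
    fix x assume "x \<in> carrier L" then show "le L x x" by simp
  next
    fix x y assume "x \<in> carrier L" "y \<in> carrier L"
    then show "le L x y \<and> le L y x \<longrightarrow> x = y" using e weak_le_antisym by metis
  next
    fix x y z assume "x \<in> carrier L" "y \<in> carrier L" "z \<in> carrier L"
    then show "le L x y \<and> le L y z \<longrightarrow> le L x z" using le_trans by blast
  next
    fix x y assume xy: "x \<in> carrier L" "y \<in> carrier L"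
    obtain s where "least L s (Upper L {x, y})" using sup_of_two_exists[OF xy] by blast
    then show "\<exists>s\<in>carrier L. le L x s \<and> le L y s \<and> (\<forall>u\<in>carrier L. le L x u \<and> le L y u \<longrightarrow> le L s u)"
      using xy unfolding least_def Upper_def by (intro bexI[of _ s]) auto
  next
    fix x y assume xy: "x \<in> carrier L" "y \<in> carrier L"
    obtain s where "greatest L s (Lower L {x, y})" using inf_of_two_exists[OF xy] by blast
    then show "\<exists>s\<in>carrier L. le L s x \<and> le L s y \<and> (\<forall>u\<in>carrier L. le L u x \<and> le L u y \<longrightarrow> le L u s)"
      using xy unfolding greatest_def Lower_def by (intro bexI[of _ s]) auto
  qed
qed

lemma plat_lattice: "plat L \<Longrightarrow> lattice L"
proof -
  assume p: "plat L"
  have e: "eq L = (=)" using p[unfolded plat_def, THEN conjunct1] by blast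
  have r: "\<And>x. x\<in>carrier L \<Longrightarrow> le L x x" using p[unfolded plat_def, THEN conjunct2, THEN conjunct1] by blast
  have a: "\<And>x y. x\<in>carrier L \<Longrightarrow> y\<in>carrier L \<Longrightarrow> le L x y \<Longrightarrow> le L y x \<Longrightarrow> x = y"
    using p[unfolded plat_def, THEN conjunct2, THEN conjunct2, THEN conjunct1] by blast
  have t: "\<And>x y z. x\<in>carrier L \<Longrightarrow> y\<in>carrier L \<Longrightarrow> z\<in>carrier L \<Longrightarrow> le L x y \<Longrightarrow> le L y z \<Longrightarrow> le L x z"
    using p[unfolded plat_def, THEN conjunct2, THEN conjunct2, THEN conjunct2, THEN conjunct1] by blast
  have su: "\<And>x y. x\<in>carrier L \<Longrightarrow> y\<in>carrier L \<Longrightarrow> \<exists>s\<in>carrier L. le L x s \<and> le L y s \<and>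
          (\<forall>u\<in>carrier L. le L x u \<and> le L y u \<longrightarrow> le L s u)"
    using p[unfolded plat_def, THEN conjunct2, THEN conjunct2, THEN conjunct2, THEN conjunct2, THEN conjunct1] by blast
  have inf: "\<And>x y. x\<in>carrier L \<Longrightarrow> y\<in>carrier L \<Longrightarrow> \<exists>s\<in>carrier L. le L s x \<and> le L s y \<and>
          (\<forall>u\<in>carrier L. le L u x \<and> le L u y \<longrightarrow> le L u s)"
    using p[unfolded plat_def, THEN conjunct2, THEN conjunct2, THEN conjunct2, THEN conjunct2, THEN conjunct2] by blast
  have po: "partial_order L"
  proof (rule partial_order.intro)
    show "weak_partial_order L"
    proof (rule weak_partial_order.intro)
      show "equivalence L" by (rule equivalence.intro) (simp_all add: e)
      show "weak_partial_order_axioms L"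
        proof (rule weak_partial_order_axioms.intro)
        show "\<And>x. x \<in> carrier L \<Longrightarrow> x \<sqsubseteq>\<^bsub>L\<^esub> x" by (rule r)
        show "\<And>x y. x \<sqsubseteq>\<^bsub>L\<^esub> y \<Longrightarrow> y \<sqsubseteq>\<^bsub>L\<^esub> x \<Longrightarrow> x \<in> carrier L \<Longrightarrow> y \<in> carrier L \<Longrightarrow> x .=\<^bsub>L\<^esub> y"
          using a e by simp
        show "\<And>x y z. x \<sqsubseteq>\<^bsub>L\<^esub> y \<Longrightarrow> y \<sqsubseteq>\<^bsub>L\<^esub> z \<Longrightarrow> x \<in> carrier L \<Longrightarrow> y \<in> carrier L \<Longrightarrow> z \<in> carrier L \<Longrightarrow> x \<sqsubseteq>\<^bsub>L\<^esub> z"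
          using t by blast
        show "\<And>x y z w. x .=\<^bsub>L\<^esub> y \<Longrightarrow> z .=\<^bsub>L\<^esub> w \<Longrightarrow> x \<in> carrier L \<Longrightarrow> y \<in> carrier L \<Longrightarrow> z \<in> carrier L \<Longrightarrow> w \<in> carrier L \<Longrightarrow> (x \<sqsubseteq>\<^bsub>L\<^esub> z) = (y \<sqsubseteq>\<^bsub>L\<^esub> w)"
          using e by simp
      qed
    qed
    show "partial_order_axioms L" by (rule partial_order_axioms.intro) (simp add: e)
  qed
  show ?thesis
  proof (rule lattice.intro)
    show "upper_semilattice L"
    proof (rule upper_semilattice.intro[OF po], rule upper_semilattice_axioms.intro)
      fix x y assume xy: "x \<in> carrier L" "y \<in> carrier L"
      then obtain s where "s\<in>carrier L" "le L x s" "le L y s" "\<forall>u\<in>carrier L. le L x u \<and> le L y u \<longrightarrow> le L s u"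
        using su by blast
      then have "least L s (Upper L {x, y})" using xy unfolding least_def Upper_def by auto
      then show "\<exists>s. least L s (Upper L {x, y})" by blast
    qed
    show "lower_semilattice L"
    proof (rule lower_semilattice.intro[OF po], rule lower_semilattice_axioms.intro)
      fix x y assume xy: "x \<in> carrier L" "y \<in> carrier L"
      then obtain s where "s\<in>carrier L" "le L s x" "le L s y" "\<forall>u\<in>carrier L. le L u x \<and> le L u y \<longrightarrow> le L u s"
        using inf by blast
      then have "greatest L s (Lower L {x, y})" using xy unfolding greatest_def Lower_def by auto
      then show "\<exists>s. greatest L s (Lower L {x, y})" by blast
    qed
  qed
qed


lemma lless_eq: "eq L = (=) \<Longrightarrow> (x \<sqsubset>\<^bsub>L\<^esub> y) \<longleftrightarrow> le L x y \<and> x \<noteq> y"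
  by (simp add: lless_def)


lemma platD:
  assumes p: "plat L"
  shows "eq L = (=)" "\<And>x. x\<in>carrier L \<Longrightarrow> le L x x"
    "\<And>x y. x\<in>carrier L \<Longrightarrow> y\<in>carrier L \<Longrightarrow> le L x y \<Longrightarrow> le L y x \<Longrightarrow> x = y"
    "\<And>x y z. x\<in>carrier L \<Longrightarrow> y\<in>carrier L \<Longrightarrow> z\<in>carrier L \<Longrightarrow> le L x y \<Longrightarrow> le L y z \<Longrightarrow> le L x z"
    "\<And>x y. x\<in>carrier L \<Longrightarrow> y\<in>carrier L \<Longrightarrow> \<exists>s\<in>carrier L. le L x s \<and> le L y s \<and>
          (\<forall>u\<in>carrier L. le L x u \<and> le L y u \<longrightarrow> le L s u)"
    "\<And>x y. x\<in>carrier L \<Longrightarrow> y\<in>carrier L \<Longrightarrow> \<exists>s\<in>carrier L. le L s x \<and> le L s y \<and>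
          (\<forall>u\<in>carrier L. le L u x \<and> le L u y \<longrightarrow> le L u s)"
  using p[unfolded plat_def, THEN conjunct1] apply blast
  using p[unfolded plat_def, THEN conjunct2, THEN conjunct1] apply blast
  using p[unfolded plat_def, THEN conjunct2, THEN conjunct2, THEN conjunct1] apply blast
  using p[unfolded plat_def, THEN conjunct2, THEN conjunct2, THEN conjunct2, THEN conjunct1] apply blast
  using p[unfolded plat_def, THEN conjunct2, THEN conjunct2, THEN conjunct2, THEN conjunct2, THEN conjunct1] apply blast
  using p[unfolded plat_def, THEN conjunct2, THEN conjunct2, THEN conjunct2, THEN conjunct2, THEN conjunct2] apply blast
  done

lemma platI:
  assumes "eq L = (=)" "\<And>x. x\<in>carrier L \<Longrightarrow> le L x x"
    "\<And>x y. x\<in>carrier L \<Longrightarrow> y\<in>carrier L \<Longrightarrow> le L x y \<Longrightarrow> le L y x \<Longrightarrow> x = y"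
    "\<And>x y z. x\<in>carrier L \<Longrightarrow> y\<in>carrier L \<Longrightarrow> z\<in>carrier L \<Longrightarrow> le L x y \<Longrightarrow> le L y z \<Longrightarrow> le L x z"
    "\<And>x y. x\<in>carrier L \<Longrightarrow> y\<in>carrier L \<Longrightarrow> \<exists>s\<in>carrier L. le L x s \<and> le L y s \<and>
          (\<forall>u\<in>carrier L. le L x u \<and> le L y u \<longrightarrow> le L s u)"
    "\<And>x y. x\<in>carrier L \<Longrightarrow> y\<in>carrier L \<Longrightarrow> \<exists>s\<in>carrier L. le L s x \<and> le L s y \<and>
          (\<forall>u\<in>carrier L. le L u x \<and> le L u y \<longrightarrow> le L u s)"
  shows "plat L"
  unfolding plat_def using assms by blast

lemma iso_counter:
  fixes L :: "'a gorder" and f :: "'a \<Rightarrow> 'b"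
  assumes ce: "counterexample L" and inj: "inj_on f (carrier L)"
  shows "counterexample \<lparr>carrier = f ` carrier L, eq = (=),
     le = (\<lambda>x y. le L (inv_into (carrier L) f x) (inv_into (carrier L) f y))\<rparr>"
    (is "counterexample ?N")
proof -
  let ?C = "carrier L"
  let ?g = "inv_into (carrier L) f"
  have gf: "\<And>a. a \<in> ?C \<Longrightarrow> ?g (f a) = a" using inj by (simp add: inv_into_f_f)
  have lat: "lattice L" and fin: "finite ?C" and c1: "card ?C > 1"
    and jb: "\<And>j. join_irreducible L j \<Longrightarrow> real (card (up_set L j)) > real (card ?C) / 2"
    using ce unfolding counterexample_def by auto
  have pL: "plat L" using lat by (rule lattice_plat)
  note P = platD[OF pL]
  have cN: "carrier ?N = f ` ?C" by simp
  have leN: "\<And>a b. a \<in> ?C \<Longrightarrow> b \<in> ?C \<Longrightarrow> le ?N (f a) (f b) = le L a b" using gf by simp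
  have pN: "plat ?N"
  proof (rule platI)
    show "eq ?N = (=)" by simp
    show "\<And>x. x\<in>carrier ?N \<Longrightarrow> le ?N x x" using leN P(2) by auto
    show "\<And>x y. x\<in>carrier ?N \<Longrightarrow> y\<in>carrier ?N \<Longrightarrow> le ?N x y \<Longrightarrow> le ?N y x \<Longrightarrow> x = y"
      unfolding cN using leN P(3) by blast
    show "\<And>x y z. x\<in>carrier ?N \<Longrightarrow> y\<in>carrier ?N \<Longrightarrow> z\<in>carrier ?N \<Longrightarrow> le ?N x y \<Longrightarrow> le ?N y z \<Longrightarrow> le ?N x z"
      unfolding cN using leN P(4) by blast
    show "\<And>x y. x\<in>carrier ?N \<Longrightarrow> y\<in>carrier ?N \<Longrightarrow> \<exists>s\<in>carrier ?N. le ?N x s \<and> le ?N y s \<and>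
          (\<forall>u\<in>carrier ?N. le ?N x u \<and> le ?N y u \<longrightarrow> le ?N s u)"
    proof -
      fix x y assume "x\<in>carrier ?N" "y\<in>carrier ?N"
      then obtain a b where ab: "a \<in> ?C" "b \<in> ?C" "x = f a" "y = f b" by auto
      then obtain s where "s \<in> ?C" "le L a s" "le L b s" "\<forall>u\<in>?C. le L a u \<and> le L b u \<longrightarrow> le L s u"
        using P(5) by blast
      then show "\<exists>s\<in>carrier ?N. le ?N x s \<and> le ?N y s \<and>
          (\<forall>u\<in>carrier ?N. le ?N x u \<and> le ?N y u \<longrightarrow> le ?N s u)"
        using ab leN by (intro bexI[of _ "f s"]) auto
    qed
    show "\<And>x y. x\<in>carrier ?N \<Longrightarrow> y\<in>carrier ?N \<Longrightarrow> \<exists>s\<in>carrier ?N. le ?N s x \<and> le ?N s y \<and>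
          (\<forall>u\<in>carrier ?N. le ?N u x \<and> le ?N u y \<longrightarrow> le ?N u s)"
    proof -
      fix x y assume "x\<in>carrier ?N" "y\<in>carrier ?N"
      then obtain a b where ab: "a \<in> ?C" "b \<in> ?C" "x = f a" "y = f b" by auto
      then obtain s where "s \<in> ?C" "le L s a" "le L s b" "\<forall>u\<in>?C. le L u a \<and> le L u b \<longrightarrow> le L u s"
        using P(6) by blast
      then show "\<exists>s\<in>carrier ?N. le ?N s x \<and> le ?N s y \<and>
          (\<forall>u\<in>carrier ?N. le ?N u x \<and> le ?N u y \<longrightarrow> le ?N u s)"
        using ab leN by (intro bexI[of _ "f s"]) auto
    qed
  qed
  have ltN: "\<And>a b. a \<in> ?C \<Longrightarrow> b \<in> ?C \<Longrightarrow> (f a \<sqsubset>\<^bsub>?N\<^esub> f b) = (a \<sqsubset>\<^bsub>L\<^esub> b)"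
    using leN P(1) inj by (simp add: lless_eq inj_on_eq_iff)
  have ucN: "\<And>a b. a \<in> ?C \<Longrightarrow> b \<in> ?C \<Longrightarrow> upper_covers ?N (f a) (f b) = upper_covers L a b"
    unfolding upper_covers_def using ltN by auto
  have covset: "\<And>a. a \<in> ?C \<Longrightarrow> {y \<in> carrier ?N. upper_covers ?N (f a) y} = f ` {y \<in> ?C. upper_covers L a y}"
    using ucN by auto
  have upN: "\<And>a. a \<in> ?C \<Longrightarrow> up_set ?N (f a) = f ` up_set L a"
    unfolding up_set_def using leN by auto
  have injs: "\<And>A. A \<subseteq> ?C \<Longrightarrow> card (f ` A) = card A"
    using inj by (meson card_image inj_on_subset)
  show ?thesis unfolding counterexample_def
  proof (intro conjI allI impI)
    show "lattice ?N" using pN by (rule plat_lattice)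
    show "finite (carrier ?N)" using fin by simp
    show "card (carrier ?N) > 1" using c1 injs by simp
    fix j assume "join_irreducible ?N j"
    then obtain a where a: "a \<in> ?C" "j = f a" and c: "card {y \<in> carrier ?N. upper_covers ?N (f a) y} = 1"
      unfolding join_irreducible_def by auto
    have "card {y \<in> ?C. upper_covers L a y} = 1" using c covset[OF a(1)] injs[of "{y \<in> ?C. upper_covers L a y}"] by auto
    then have "join_irreducible L a" using a unfolding join_irreducible_def by simp
    then have "real (card (up_set L a)) > real (card ?C) / 2" by (rule jb)
    moreover have "card (up_set ?N j) = card (up_set L a)" using a upN injs[of "up_set L a"] unfolding up_set_def by auto
    moreover have "card (carrier ?N) = card ?C" using injs by simp
    ultimately show "real (card (up_set ?N j)) > real (card (carrier ?N)) / 2" by simp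
  qed
qed


lemma ucov_iff: "eq L = (=) \<Longrightarrow> upper_covers L x y \<longleftrightarrow> x \<in> carrier L \<and> y \<in> carrier L \<and> le L y x \<and> y \<noteq> x \<and>
    \<not> (\<exists>z\<in>carrier L. le L y z \<and> y \<noteq> z \<and> le L z x \<and> z \<noteq> x)"
  unfolding upper_covers_def by (simp add: lless_eq)

lemma maxl:
  assumes p: "plat L" and "finite A" "A \<noteq> {}" "A \<subseteq> carrier L"
  shows "\<exists>x\<in>A. \<forall>y\<in>A. le L x y \<longrightarrow> y = x"
  using assms(2-4)
proof (induction A rule: finite_ne_induct)
  case (singleton x) then show ?case by simp
next
  case (insert a A)
  note P = platD[OF p]
  from insert obtain x where x: "x \<in> A" "\<forall>y\<in>A. le L x y \<longrightarrow> y = x" by auto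
  show ?case
  proof (cases "le L x a \<and> a \<noteq> x")
    case True
    have "\<forall>y\<in>insert a A. le L a y \<longrightarrow> y = a"
    proof
      fix y assume y: "y \<in> insert a A"
      show "le L a y \<longrightarrow> y = a"
      proof
        assume ay: "le L a y"
        show "y = a"
        proof (cases "y = a")
          case False
          then have "y \<in> A" using y by auto
          moreover have "le L x y" using P(4)[of x a y] True ay insert.prems x(1) \<open>y \<in> A\<close> by auto
          ultimately have "y = x" using x by auto
          then show ?thesis using P(3)[of x a] True ay insert.prems x(1) by auto
        qed simp
      qed
    qed
    then show ?thesis by blast
  next
    case False
    have "\<forall>y\<in>insert a A. le L x y \<longrightarrow> y = x" using False x by auto
    then show ?thesis using x(1) by blast
  qed
qed

lemma minl:
  assumes p: "plat L" and "finite A" "A \<noteq> {}" "A \<subseteq> carrier L"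
  shows "\<exists>x\<in>A. \<forall>y\<in>A. le L y x \<longrightarrow> y = x"
  using assms(2-4)
proof (induction A rule: finite_ne_induct)
  case (singleton x) then show ?case by simp
next
  case (insert a A)
  note P = platD[OF p]
  from insert obtain x where x: "x \<in> A" "\<forall>y\<in>A. le L y x \<longrightarrow> y = x" by auto
  show ?case
  proof (cases "le L a x \<and> a \<noteq> x")
    case True
    have "\<forall>y\<in>insert a A. le L y a \<longrightarrow> y = a"
    proof
      fix y assume y: "y \<in> insert a A"
      show "le L y a \<longrightarrow> y = a"
      proof
        assume ay: "le L y a"
        show "y = a"
        proof (cases "y = a")
          case False
          then have "y \<in> A" using y by auto
          moreover have "le L y x" using P(4)[of y a x] True ay insert.prems x(1) \<open>y \<in> A\<close> by auto
          ultimately have "y = x" using x by auto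
          then show ?thesis using P(3)[of x a] True ay insert.prems x(1) by auto
        qed simp
      qed
    qed
    then show ?thesis by blast
  next
    case False
    have "\<forall>y\<in>insert a A. le L y x \<longrightarrow> y = x" using False x by auto
    then show ?thesis using x(1) by blast
  qed
qed

lemma cov_below:
  assumes p: "plat L" and fin: "finite (carrier L)" and zx: "z \<in> carrier L" "x \<in> carrier L" "le L z x" "z \<noteq> x"
  shows "\<exists>w\<in>carrier L. upper_covers L x w \<and> le L z w"
proof -
  note P = platD[OF p]
  let ?A = "{w\<in>carrier L. le L z w \<and> le L w x \<and> w \<noteq> x}"
  have "z \<in> ?A" using zx P(2) by auto
  then obtain w where w: "w \<in> ?A" "\<forall>y\<in>?A. le L w y \<longrightarrow> y = w"
    using maxl[OF p, of ?A] fin by (metis (no_types, lifting) empty_iff mem_Collect_eq rev_finite_subset subsetI)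
  have "upper_covers L x w"
    unfolding ucov_iff[OF P(1)]
  proof (intro conjI)
    show "\<not> (\<exists>v\<in>carrier L. le L w v \<and> w \<noteq> v \<and> le L v x \<and> v \<noteq> x)"
    proof
      assume "\<exists>v\<in>carrier L. le L w v \<and> w \<noteq> v \<and> le L v x \<and> v \<noteq> x"
      then obtain v where v: "v \<in> carrier L" "le L w v" "w \<noteq> v" "le L v x" "v \<noteq> x" by blast
      have "le L z v" using P(4)[of z w v] v w(1) zx by auto
      then have "v \<in> ?A" using v by auto
      then show False using w v by auto
    qed
  qed (use w zx in auto)
  then show ?thesis using w by auto
qed

lemma cov_above:
  assumes p: "plat L" and fin: "finite (carrier L)" and zx: "z \<in> carrier L" "x \<in> carrier L" "le L z x" "z \<noteq> x"
  shows "\<exists>w\<in>carrier L. upper_covers L w z \<and> le L w x"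
proof -
  note P = platD[OF p]
  let ?A = "{w\<in>carrier L. le L w x \<and> le L z w \<and> w \<noteq> z}"
  have "x \<in> ?A" using zx P(2) by auto
  then obtain w where w: "w \<in> ?A" "\<forall>y\<in>?A. le L y w \<longrightarrow> y = w"
    using minl[OF p, of ?A] fin by (metis (no_types, lifting) empty_iff mem_Collect_eq rev_finite_subset subsetI)
  have "upper_covers L w z"
    unfolding ucov_iff[OF P(1)]
  proof (intro conjI)
    show "\<not> (\<exists>v\<in>carrier L. le L z v \<and> z \<noteq> v \<and> le L v w \<and> v \<noteq> w)"
    proof
      assume "\<exists>v\<in>carrier L. le L z v \<and> z \<noteq> v \<and> le L v w \<and> v \<noteq> w"
      then obtain v where v: "v \<in> carrier L" "le L z v" "z \<noteq> v" "le L v w" "v \<noteq> w" by blast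
      have "le L v x" using P(4)[of v w x] v w(1) zx by auto
      then have "v \<in> ?A" using v by auto
      then show False using w v by auto
    qed
  qed (use w zx in auto)
  then show ?thesis using w by auto
qed


lemma sub_plat:
  assumes p: "plat L" and m: "m \<in> carrier L" and ms: "upper_covers L ms m"
    and uniq: "\<And>y. upper_covers L y m \<Longrightarrow> y = ms"
    and fin: "finite (carrier L)"
  shows "plat \<lparr>carrier = carrier L - {m}, eq = (=), le = le L\<rparr>" (is "plat ?S")
proof -
  note P = platD[OF p]
  have msC: "ms \<in> carrier L" and mms: "le L m ms" "m \<noteq> ms" using ms unfolding ucov_iff[OF P(1)] by auto
  have above: "\<And>y. y \<in> carrier L \<Longrightarrow> le L m y \<Longrightarrow> m \<noteq> y \<Longrightarrow> le L ms y"
    using cov_above[OF p fin m] uniq by blast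
  show ?thesis
  proof (rule platI)
    show "eq ?S = (=)" by simp
    show "\<And>x. x\<in>carrier ?S \<Longrightarrow> le ?S x x" using P(2) by auto
    show "\<And>x y. x\<in>carrier ?S \<Longrightarrow> y\<in>carrier ?S \<Longrightarrow> le ?S x y \<Longrightarrow> le ?S y x \<Longrightarrow> x = y"
      using P(3) by auto
    show "\<And>x y z. x\<in>carrier ?S \<Longrightarrow> y\<in>carrier ?S \<Longrightarrow> z\<in>carrier ?S \<Longrightarrow> le ?S x y \<Longrightarrow> le ?S y z \<Longrightarrow> le ?S x z"
      using P(4) by auto
    show "\<exists>s\<in>carrier ?S. le ?S x s \<and> le ?S y s \<and>
          (\<forall>u\<in>carrier ?S. le ?S x u \<and> le ?S y u \<longrightarrow> le ?S s u)" if xy: "x\<in>carrier ?S" "y\<in>carrier ?S" for x y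
    proof -
      obtain s where s: "s \<in> carrier L" "le L x s" "le L y s" "\<forall>u\<in>carrier L. le L x u \<and> le L y u \<longrightarrow> le L s u"
        using P(5)[of x y] xy by auto
      show ?thesis
      proof (cases "s = m")
        case False then show ?thesis using s by (intro bexI[of _ s]) auto
      next
        case True
        have "le L x ms" using P(4)[of x m ms] s True mms xy msC by auto
        moreover have "le L y ms" using P(4)[of y m ms] s True mms xy msC by auto
        moreover have "\<forall>u\<in>carrier ?S. le ?S x u \<and> le ?S y u \<longrightarrow> le ?S ms u"
          using s True above by auto
        ultimately show ?thesis using msC mms by (intro bexI[of _ ms]) auto
      qed
    qed
    show "\<exists>s\<in>carrier ?S. le ?S s x \<and> le ?S s y \<and>
          (\<forall>u\<in>carrier ?S. le ?S u x \<and> le ?S u y \<longrightarrow> le ?S u s)" if xy: "x\<in>carrier ?S" "y\<in>carrier ?S" for x y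
    proof -
      obtain s where s: "s \<in> carrier L" "le L s x" "le L s y" "\<forall>u\<in>carrier L. le L u x \<and> le L u y \<longrightarrow> le L u s"
        using P(6)[of x y] xy by auto
      have "s \<noteq> m"
      proof
        assume sm: "s = m"
        have "le L ms x" using above[of x] s sm xy by auto
        moreover have "le L ms y" using above[of y] s sm xy by auto
        ultimately have "le L ms m" using s sm msC by auto
        then show False using P(3)[of m ms] mms m msC by auto
      qed
      then show ?thesis using s by (intro bexI[of _ s]) auto
    qed
  qed
qed


lemma arith_half:
  fixes k n :: nat
  assumes "2*k \<le> n+1" "real k > real n / 2"
  shows "real k = (real n + 1) / 2"
proof -
  have "real (2*k) > real n" using assms(2) by simp
  then have "2*k > n" by linarith
  then have "2*k = n+1" using assms(1) by linarith
  then have "real (2*k) = real (n+1)" by simp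
  then show ?thesis by simp
qed

theorem theorem2p12:
  fixes L :: "'a gorder" and m :: 'a
  assumes "min_counterexample L"
    and "meet_irreducible L m"
  shows "\<exists>j. join_irreducible L j \<and> j \<sqsubseteq>\<^bsub>L\<^esub> m \<and>
           real (card (up_set L j)) = (real (card (carrier L)) + 1) / 2"
proof -
  let ?C = "carrier L"
  let ?n = "card ?C"
  have ce: "counterexample L" and minc: "\<And>L' :: nat gorder. counterexample L' \<Longrightarrow> ?n \<le> card (carrier L')"
    using assms(1) unfolding min_counterexample_def by auto
  have lat: "lattice L" and fin: "finite ?C" and c1: "?n > 1"
    and jb: "\<And>j. join_irreducible L j \<Longrightarrow> real (card (up_set L j)) > real ?n / 2"
    using ce unfolding counterexample_def by auto
  have p: "plat L" using lat by (rule lattice_plat)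
  note P = platD[OF p]
  note uc = ucov_iff[OF P(1)]
  have mC: "m \<in> ?C" and cm: "card {y \<in> ?C. upper_covers L y m} = 1"
    using assms(2) unfolding meet_irreducible_def by auto
  then obtain ms where msset: "{y \<in> ?C. upper_covers L y m} = {ms}" by (meson card_1_singletonE)
  have ms: "upper_covers L ms m" using msset by auto
  have uniq: "\<And>y. upper_covers L y m \<Longrightarrow> y = ms" using msset unfolding upper_covers_def by blast
  have msC: "ms \<in> ?C" and mms: "le L m ms" "m \<noteq> ms" using ms unfolding uc by auto
  have above: "\<And>y. y \<in> ?C \<Longrightarrow> le L m y \<Longrightarrow> m \<noteq> y \<Longrightarrow> le L ms y"
    using cov_above[OF p fin mC] uniq by blast
  have nmsm: "\<not> le L ms m" using P(3)[of m ms] mms mC msC by auto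
  show ?thesis
  proof (cases "?n = 2")
    case True
    have sub: "{m, ms} \<subseteq> ?C" using mC msC by auto
    have "card {m, ms} = 2" using mms by simp
    then have Ceq: "?C = {m, ms}" using card_subset_eq[OF fin sub] True by simp
    have "{y \<in> ?C. upper_covers L ms y} = {m}" using ms Ceq unfolding uc by auto
    then have "join_irreducible L ms" using msC unfolding join_irreducible_def by simp
    then have "real (card (up_set L ms)) > real ?n / 2" by (rule jb)
    moreover have "up_set L ms = {ms}" using Ceq nmsm P(2) msC unfolding up_set_def by auto
    ultimately show ?thesis using True by simp
  next
    case False
    then have n3: "?n \<ge> 3" using c1 by simp
    let ?S = "\<lparr>carrier = ?C - {m}, eq = (=), le = le L\<rparr> :: 'a gorder"
    have pS: "plat ?S" using sub_plat[OF p mC ms uniq fin] .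
    have latS: "lattice ?S" using pS by (rule plat_lattice)
    have cardS: "card (?C - {m}) = ?n - 1" using mC fin by simp
    have notce: "\<not> counterexample ?S"
    proof
      assume ceS: "counterexample ?S"
      obtain f :: "'a \<Rightarrow> nat" where "bij_betw f (?C - {m}) {0..<card (?C - {m})}"
        using ex_bij_betw_finite_nat fin by blast
      then have inj: "inj_on f (?C - {m})" by (simp add: bij_betw_def)
      have "counterexample \<lparr>carrier = f ` carrier ?S, eq = (=),
          le = (\<lambda>x y. le ?S (inv_into (carrier ?S) f x) (inv_into (carrier ?S) f y))\<rparr>"
        using iso_counter[OF ceS] inj by simp
      from minc[OF this] have "?n \<le> card (f ` (?C - {m}))" by simp
      also have "\<dots> = ?n - 1" using card_image[OF inj] cardS by simp
      finally show False using n3 by simp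
    qed
    then obtain j' where jS: "join_irreducible ?S j'"
      and small: "\<not> real (card (up_set ?S j')) > real (card (?C - {m})) / 2"
      using latS fin cardS n3 unfolding counterexample_def by auto
    have small2: "2 * card (up_set ?S j') \<le> ?n - 1"
    proof -
      have "real (card (up_set ?S j')) \<le> real (?n - 1) / 2" using small cardS by simp
      then have "real (2 * card (up_set ?S j')) \<le> real (?n - 1)" by simp
      then show ?thesis by linarith
    qed
    have j'C: "j' \<in> ?C" "j' \<noteq> m" using jS unfolding join_irreducible_def by auto
    have upS: "up_set ?S j' = up_set L j' - {m}" unfolding up_set_def by auto
    have ucS: "\<And>x y. upper_covers ?S x y \<longleftrightarrow> x \<in> ?C - {m} \<and> y \<in> ?C - {m} \<and> le L y x \<and> y \<noteq> x \<and>
        \<not> (\<exists>z\<in>?C - {m}. le L y z \<and> y \<noteq> z \<and> le L z x \<and> z \<noteq> x)"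
      by (subst ucov_iff) simp_all
    have cv1: "\<And>x y. x \<in> ?C - {m} \<Longrightarrow> y \<in> ?C - {m} \<Longrightarrow> upper_covers L x y \<Longrightarrow> upper_covers ?S x y"
      unfolding ucS uc by blast
    have cv2: "x = ms" if xy: "x \<in> ?C - {m}" "y \<in> ?C - {m}" "upper_covers ?S x y" "\<not> upper_covers L x y" for x y
    proof (rule ccontr)
      assume xms: "x \<noteq> ms"
      from xy have yx: "le L y x" "y \<noteq> x" and nS: "\<not> (\<exists>z\<in>?C - {m}. le L y z \<and> y \<noteq> z \<and> le L z x \<and> z \<noteq> x)"
        unfolding ucS by auto
      then obtain z where z: "z \<in> ?C" "le L y z" "y \<noteq> z" "le L z x" "z \<noteq> x" using xy unfolding uc by auto
      then have zm: "z = m" using nS by blast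
      have "le L ms x" using above[of x] z zm xy by auto
      moreover have "le L y ms" using P(4)[of y m ms] z zm mms xy msC by auto
      moreover have "y \<noteq> ms" using z zm nmsm by auto
      ultimately show False using nS msC mms xms by auto
    qed
    show ?thesis
    proof (cases "j' = ms")
      case False
      have "{y \<in> ?C. upper_covers L j' y} = {y \<in> carrier ?S. upper_covers ?S j' y}"
      proof (intro equalityI subsetI)
        fix y assume y: "y \<in> {y \<in> ?C. upper_covers L j' y}"
        then have "y \<noteq> m" using uniq False by blast
        then show "y \<in> {y \<in> carrier ?S. upper_covers ?S j' y}" using y cv1 j'C by auto
      next
        fix y assume y: "y \<in> {y \<in> carrier ?S. upper_covers ?S j' y}"
        then show "y \<in> {y \<in> ?C. upper_covers L j' y}" using cv2[of j' y] False j'C by auto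
      qed
      then have jL: "join_irreducible L j'" using jS j'C unfolding join_irreducible_def by simp
      then have big: "real (card (up_set L j')) > real ?n / 2" by (rule jb)
      have finU: "finite (up_set L j')" using fin unfolding up_set_def by simp
      have mU: "m \<in> up_set L j'"
      proof (rule ccontr)
        assume "m \<notin> up_set L j'"
        then have "up_set ?S j' = up_set L j'" using upS by simp
        then show False using big small2 by simp
      qed
      then have "card (up_set L j') = card (up_set ?S j') + 1" using upS finU
        by (simp add: card_Diff_singleton) (metis Suc_pred card_gt_0_iff empty_iff)
      then have "2 * card (up_set L j') \<le> ?n + 1" using small2 n3 by linarith
      then have "real (card (up_set L j')) = (real ?n + 1) / 2" using arith_half big by blast
      moreover have "le L j' m" using mU unfolding up_set_def by simp
      ultimately show ?thesis using jL by blast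
    next
      case True
      have finU: "\<And>x. finite (up_set L x)" using fin unfolding up_set_def by simp
      have "m \<notin> up_set L ms" using nmsm unfolding up_set_def by simp
      then have upms: "up_set ?S ms = up_set L ms" using upS True by simp
      have small3: "2 * card (up_set L ms) \<le> ?n - 1" using small2 upms True by simp
      have nj: "\<not> join_irreducible L ms"
      proof
        assume "join_irreducible L ms"
        then have "real (card (up_set L ms)) > real ?n / 2" by (rule jb)
        then have "real (2 * card (up_set L ms)) > real ?n" by simp
        then show False using small3 by linarith
      qed
      let ?K = "{y \<in> ?C. upper_covers L ms y}"
      have mK: "m \<in> ?K" using ms mC by simp
      have "?K \<noteq> {m}" using nj msC unfolding join_irreducible_def by auto
      then obtain c where cK: "c \<in> ?K" "c \<noteq> m" using mK by blast
      have cC: "c \<in> ?C" and msc: "upper_covers L ms c" using cK by auto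
      have cS: "upper_covers ?S ms c" using cv1[of ms c] cK msC mms by auto
      have cardS1: "card {y \<in> carrier ?S. upper_covers ?S ms y} = 1" using jS True unfolding join_irreducible_def by simp
      have onlyc: "\<And>y. y \<in> ?C - {m} \<Longrightarrow> upper_covers ?S ms y \<Longrightarrow> y = c"
      proof -
        fix y assume y: "y \<in> ?C - {m}" "upper_covers ?S ms y"
        obtain a where a: "{y \<in> carrier ?S. upper_covers ?S ms y} = {a}" using cardS1 by (meson card_1_singletonE)
        have "c \<in> {y \<in> carrier ?S. upper_covers ?S ms y}" using cS cC cK by simp
        moreover have "y \<in> {y \<in> carrier ?S. upper_covers ?S ms y}" using y by simp
        ultimately show "y = c" using a by (metis singletonD)
      qed
      have cms: "le L c ms" "c \<noteq> ms" using msc unfolding uc by auto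
      have nmc: "\<not> le L m c"
      proof
        assume "le L m c"
        then show False using ms cC cK cms unfolding uc by blast
      qed
      have D: "le L y c" if y: "upper_covers L m y" for y
      proof -
        have yC: "y \<in> ?C" and ym: "le L y m" "y \<noteq> m" using y unfolding uc by auto
        have yms: "le L y ms" using P(4)[of y m ms] yC ym mC msC mms by auto
        have ynms: "y \<noteq> ms" using ym nmsm by auto
        have "\<not> upper_covers ?S ms y"
        proof
          assume "upper_covers ?S ms y"
          then have "y = c" using onlyc yC ym by auto
          then show False using msc ms ym yC mC unfolding uc by blast
        qed
        then obtain z where z: "z \<in> ?C - {m}" "le L y z" "y \<noteq> z" "le L z ms" "z \<noteq> ms"
          unfolding ucS using yC ym yms ynms msC mms by auto
        obtain w where w: "w \<in> ?C" "upper_covers L ms w" "le L z w"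
          using cov_below[OF p fin, of z ms] z msC by auto
        have "w \<noteq> m"
        proof
          assume "w = m"
          then have "le L z m" using w by simp
          then show False using y z unfolding uc by blast
        qed
        then have "upper_covers ?S ms w" using cv1[of ms w] w msC mms by auto
        then have "w = c" using onlyc w \<open>w \<noteq> m\<close> by auto
        then show "le L y c" using P(4)[of y z c] z w yC cC by auto
      qed
      let ?Km = "{y \<in> ?C. upper_covers L m y}"
      have Kne: "?Km \<noteq> {}"
      proof -
        obtain i where i: "i \<in> ?C" "le L i m" "le L i c" using P(6)[OF mC cC] by auto
        have "i \<noteq> m" using i nmc by auto
        then obtain w where "w \<in> ?C" "upper_covers L m w" using cov_below[OF p fin, of i m] i mC by auto
        then show ?thesis by auto
      qed
      show ?thesis
      proof (cases "card ?Km = 1")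
        case True
        then have jm: "join_irreducible L m" using mC unfolding join_irreducible_def by simp
        then have big: "real (card (up_set L m)) > real ?n / 2" by (rule jb)
        have "up_set L m = insert m (up_set L ms)"
        proof (intro equalityI subsetI)
          fix y assume "y \<in> up_set L m"
          then show "y \<in> insert m (up_set L ms)" using above unfolding up_set_def by auto
        next
          fix y assume "y \<in> insert m (up_set L ms)"
          then show "y \<in> up_set L m" using P(4)[of m ms y] P(2) mC msC mms unfolding up_set_def by auto
        qed
        then have "card (up_set L m) = card (up_set L ms) + 1"
          using finU \<open>m \<notin> up_set L ms\<close> by simp
        then have "2 * card (up_set L m) \<le> ?n + 1" using small3 n3 by linarith
        then have "real (card (up_set L m)) = (real ?n + 1) / 2" using arith_half big by blast
        moreover have "le L m m" using P(2) mC by simp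
        ultimately show ?thesis using jm by blast
      next
        case False
        have finK: "finite ?Km" using fin by simp
        obtain y1 y2 where y: "y1 \<in> ?Km" "y2 \<in> ?Km" "y1 \<noteq> y2"
        proof -
          obtain y1 where y1: "y1 \<in> ?Km" using Kne by blast
          have "?Km \<noteq> {y1}" using False by auto
          then obtain y2 where "y2 \<in> ?Km" "y2 \<noteq> y1" using y1 by blast
          then show ?thesis using that y1 by blast
        qed
        have y1C: "y1 \<in> ?C" "le L y1 m" "y1 \<noteq> m" and y2C: "y2 \<in> ?C" "le L y2 m" "y2 \<noteq> m"
          using y unfolding uc by auto
        obtain sj where sj: "sj \<in> ?C" "le L y1 sj" "le L y2 sj"
          "\<forall>u\<in>?C. le L y1 u \<and> le L y2 u \<longrightarrow> le L sj u"
          using P(5)[OF y1C(1) y2C(1)] by auto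
        have sjm: "le L sj m" using sj y1C y2C mC by auto
        have sj1: "sj \<noteq> y1"
        proof
          assume "sj = y1"
          then have "le L y2 y1" using sj by simp
          then show False using y y1C unfolding uc by blast
        qed
        have "sj = m"
        proof (rule ccontr)
          assume "sj \<noteq> m"
          then show False using y sj sjm sj1 unfolding uc by blast
        qed
        moreover have "le L sj c" using sj D y cC by auto
        ultimately show ?thesis using nmc by simp
      qed
    qed
  qed
qed

end
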